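(* Let $\lambda>0$ and let $U$ be a non-central chi-squared random variable with four degrees of freedom and non-centrality parameter $\lambda$. Then for every $x>0$, \begin{align*} E\left( \frac{\lambda}{U} \right) &= 1-\exp (-\lambda /2),\\ E\left( \frac{\lambda}{U} 1_{U< x}\right) &= \chi^2_{0,\lambda }(x) - \exp (-\lambda /2),\\ E\left( \frac{\lambda}{U} 1_{U\ge x}\right) &= 1-\chi^2_{0,\lambda }(x). \end{align*}
   Context: For $\nu\ge 0$ and $\lambda>0$, $\chi^2_{\nu,\lambda}$ denotes the cumulative distribution function of a non-central chi-squared random variable with $\nu$ degrees of freedom and non-centrality parameter $\lambda$, i.e. of a chi-squared random variable $X_N$ with a random number $N=\nu+2P$ of degrees of freedom, where $P$ is Poisson distributed with mean $\lambda/2$ (with the convention that a chi-squared variable with $0$ degrees of freedom equals $0$). In particular $\chi^2_{0,\lambda}$ is the distribution function of this mixture with $\nu=0$, which has an atom of mass $\exp(-\lambda/2)$ at $0$. *)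

theory Defs
  imports "HOL-Probability.Probability"
begin

definition chi2_density :: "real \<Rightarrow> real \<Rightarrow> real" where
  "chi2_density k x =
     (if x > 0 then x powr (k / 2 - 1) * exp (- x / 2) / (2 powr (k / 2) * Gamma (k / 2)) else 0)"

definition chi2_measure :: "real \<Rightarrow> real measure" where
  "chi2_measure k = (if k = 0 then return borel 0 else density lborel (\<lambda>x. ennreal (chi2_density k x)))"

definition ncchi2_measure :: "real \<Rightarrow> real \<Rightarrow> real measure" where
  "ncchi2_measure nu lam =
     measure_pmf (poisson_pmf (lam / 2)) \<bind> (\<lambda>j. chi2_measure (nu + 2 * real j))"

definition ncchi2_cdf :: "real \<Rightarrow> real \<Rightarrow> real \<Rightarrow> real" where
  "ncchi2_cdf nu lam x = measure (ncchi2_measure nu lam) {..x}"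

end

theory Submission
  imports Defs
begin

lemma chi2_even:
  "chi2_measure (2 * real (Suc n)) = density lborel (\<lambda>x. ennreal (erlang_density n (1/2) x))"
proof -
  have "density lborel (\<lambda>x. ennreal (chi2_density (2 * real (Suc n)) x))
      = density lborel (\<lambda>x. ennreal (erlang_density n (1/2) x))"
  proof (rule density_cong)
    show "AE x in lborel. ennreal (chi2_density (2 * real (Suc n)) x) = ennreal (erlang_density n (1/2) x)"
      using AE_lborel_singleton[of 0]
    proof eventually_elim
      case (elim x)
      show ?case
      proof (cases "x > 0")
        case True
        have g: "Gamma (2 * real (Suc n) / 2) = fact n"
          proof -
          have e: "2 * real (Suc n) / 2 = 1 + real n" by simp
          show ?thesis using Gamma_fact[of n, where 'a=real] by (simp only: e)
        qed
        have p: "x powr (2 * real (Suc n) / 2 - 1) = x ^ n"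
        proof -
          have e: "2 * real (Suc n) / 2 - 1 = real n" by (simp add: field_simps)
          show ?thesis using True by (simp only: e powr_realpow)
        qed
        have q: "(2::real) powr (2 * real (Suc n) / 2) = 2 ^ Suc n"
        proof -
          have e: "2 * real (Suc n) / 2 = real (Suc n)" by simp
          show ?thesis by (simp only: e powr_realpow)
        qed
        have "chi2_density (2 * real (Suc n)) x = erlang_density n (1/2) x"
        proof -
          have "chi2_density (2 * real (Suc n)) x = x ^ n * exp (- x / 2) / (2 ^ Suc n * fact n)"
            unfolding chi2_density_def using True by (simp only: p q g if_True)
          also have "\<dots> = erlang_density n (1/2) x"
            using True unfolding erlang_density_def by (simp add: power_one_over field_simps)
          finally show ?thesis .
        qed
        then show ?thesis by simp
      next
        case False
        with elim have "x < 0" by simp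
        then show ?thesis by (simp add: chi2_density_def erlang_density_def)
      qed
    qed
  qed (auto simp: chi2_density_def)
  then show ?thesis by (simp add: chi2_measure_def)
qed

lemma sets_chi2[simp]: "sets (chi2_measure k) = sets borel"
  by (simp add: chi2_measure_def)

lemma prob_chi2: "prob_space (chi2_measure (2 * real m))"
proof (cases m)
  case 0 then show ?thesis by (simp add: chi2_measure_def prob_space_return)
next
  case (Suc n) then show ?thesis
    using prob_space_erlang_density[of "1/2" n] chi2_even[of n] by (metis half_gt_zero zero_less_one)
qed

lemma key:
  assumes A[measurable]: "A \<in> sets borel" and lam: "lam > 0"
  shows "(\<integral>\<^sup>+u. ennreal (lam / u * indicator A u) \<partial>chi2_measure (4 + 2 * real j))
       = ennreal (lam / (2 * (real j + 1))) * emeasure (chi2_measure (2 * real (Suc j))) A"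
proof -
  have e4: "4 + 2 * real j = 2 * real (Suc (Suc j))" by simp
  have "(\<integral>\<^sup>+u. ennreal (lam / u * indicator A u) \<partial>chi2_measure (4 + 2 * real j))
     = (\<integral>\<^sup>+u. ennreal (erlang_density (Suc j) (1/2) u) * ennreal (lam / u * indicator A u) \<partial>lborel)"
    unfolding e4 chi2_even by (rule nn_integral_density) auto
  also have "\<dots> = (\<integral>\<^sup>+u. ennreal (lam / (2 * (real j + 1))) * (ennreal (erlang_density j (1/2) u) * indicator A u) \<partial>lborel)"
  proof (rule nn_integral_cong_AE)
    show "AE u in lborel. ennreal (erlang_density (Suc j) (1/2) u) * ennreal (lam / u * indicator A u)
       = ennreal (lam / (2 * (real j + 1))) * (ennreal (erlang_density j (1/2) u) * indicator A u)"
      using AE_lborel_singleton[of 0]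
    proof eventually_elim
      case (elim u)
      show ?case
      proof (cases "u > 0")
        case True
        have r: "erlang_density (Suc j) (1/2) u * (lam / u) = lam / (2 * (real j + 1)) * erlang_density j (1/2) u"
          using True unfolding erlang_density_def by (simp add: field_simps)
        have n1: "0 \<le> lam / u" using True lam by simp
        have n2: "0 \<le> lam / (2 * (real j + 1))" using lam by simp
        show ?thesis using r n1 n2 True
          by (auto simp: ennreal_mult'[symmetric] ennreal_mult[symmetric] split: split_indicator)
      next
        case False
        with elim have "u < 0" by simp
        then show ?thesis by (simp add: erlang_density_def)
      qed
    qed
  qed
  also have "\<dots> = ennreal (lam / (2 * (real j + 1))) * (\<integral>\<^sup>+u. ennreal (erlang_density j (1/2) u) * indicator A u \<partial>lborel)"
    by (rule nn_integral_cmult) auto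
  also have "\<dots> = ennreal (lam / (2 * (real j + 1))) * emeasure (chi2_measure (2 * real (Suc j))) A"
    unfolding chi2_even by (subst emeasure_density) auto
  finally show ?thesis .
qed

lemma meas4: "(\<lambda>j. chi2_measure (4 + 2 * real j)) \<in> measurable (measure_pmf P) (subprob_algebra borel)"
proof -
  have "prob_space (chi2_measure (4 + 2 * real j))" for j
    using prob_chi2[of "Suc (Suc j)"] by (simp add: algebra_simps)
  then show ?thesis by (auto simp: space_subprob_algebra intro: prob_space_imp_subprob_space)
qed

lemma meas0: "(\<lambda>j. chi2_measure (0 + 2 * real j)) \<in> measurable (measure_pmf P) (subprob_algebra borel)"
  using prob_chi2 by (auto simp: space_subprob_algebra intro: prob_space_imp_subprob_space)

lemma pmf_sum:
  fixes f :: "nat \<Rightarrow> ennreal"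
  shows "(\<integral>\<^sup>+j. f j \<partial>measure_pmf P) = (\<Sum>j. ennreal (pmf P j) * f j)"
  by (simp add: nn_integral_measure_pmf nn_integral_count_space_nat)

lemma sum_shift:
  fixes f :: "nat \<Rightarrow> ennreal"
  shows "(\<Sum>j. f j) = (\<Sum>j. f (Suc j)) + f 0"
  using suminf_offset[of f 1] by simp

lemma sumI:
  assumes "prob_space M"
    and U[measurable]: "U \<in> borel_measurable M"
    and D: "distr M borel U = ncchi2_measure 4 lam"
    and lam: "lam > 0"
    and A[measurable]: "A \<in> sets borel"
  shows "(\<integral>\<^sup>+\<omega>. ennreal (lam / U \<omega> * indicator A (U \<omega>)) \<partial>M)
    = (\<Sum>j. ennreal (pmf (poisson_pmf (lam/2)) (Suc j)) * emeasure (chi2_measure (2 * real (Suc j))) A)"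
proof -
  let ?P = "poisson_pmf (lam/2)"
  have "(\<integral>\<^sup>+\<omega>. ennreal (lam / U \<omega> * indicator A (U \<omega>)) \<partial>M)
     = (\<integral>\<^sup>+u. ennreal (lam / u * indicator A u) \<partial>distr M borel U)"
    by (subst nn_integral_distr) auto
  also have "\<dots> = (\<integral>\<^sup>+j. \<integral>\<^sup>+u. ennreal (lam / u * indicator A u) \<partial>chi2_measure (4 + 2 * real j) \<partial>measure_pmf ?P)"
    unfolding D ncchi2_measure_def by (rule nn_integral_bind[OF _ meas4]) auto
  also have "\<dots> = (\<integral>\<^sup>+j. ennreal (lam / (2 * (real j + 1))) * emeasure (chi2_measure (2 * real (Suc j))) A \<partial>measure_pmf ?P)"
    by (simp only: key[OF A lam])
  also have "\<dots> = (\<Sum>j. ennreal (pmf ?P j) * (ennreal (lam / (2 * (real j + 1))) * emeasure (chi2_measure (2 * real (Suc j))) A))"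
    by (rule pmf_sum)
  also have "\<dots> = (\<Sum>j. ennreal (pmf ?P (Suc j)) * emeasure (chi2_measure (2 * real (Suc j))) A)"
  proof (rule suminf_cong)
    fix j
    have r: "pmf ?P j * (lam / (2 * (real j + 1))) = pmf ?P (Suc j)"
      using lam by (simp add: field_simps)
    have "ennreal (pmf ?P j) * ennreal (lam / (2 * (real j + 1))) = ennreal (pmf ?P (Suc j))"
      using lam r by (simp add: ennreal_mult[symmetric])
    then show "ennreal (pmf ?P j) * (ennreal (lam / (2 * (real j + 1))) * emeasure (chi2_measure (2 * real (Suc j))) A)
      = ennreal (pmf ?P (Suc j)) * emeasure (chi2_measure (2 * real (Suc j))) A"
      by (simp add: mult.assoc[symmetric])
  qed
  finally show ?thesis .
qed

lemma sumE:
  assumes lam: "lam > 0" and B[measurable]: "B \<in> sets borel"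
  shows "emeasure (ncchi2_measure 0 lam) B
    = (\<Sum>j. ennreal (pmf (poisson_pmf (lam/2)) (Suc j)) * emeasure (chi2_measure (2 * real (Suc j))) B)
      + ennreal (exp (- lam / 2)) * emeasure (return borel 0) B"
proof -
  let ?P = "poisson_pmf (lam/2)"
  have "emeasure (ncchi2_measure 0 lam) B = (\<integral>\<^sup>+j. emeasure (chi2_measure (0 + 2 * real j)) B \<partial>measure_pmf ?P)"
    unfolding ncchi2_measure_def by (rule emeasure_bind[OF _ meas0]) auto
  also have "\<dots> = (\<Sum>j. ennreal (pmf ?P j) * emeasure (chi2_measure (2 * real j)) B)"
    by (simp add: pmf_sum)
  also have "\<dots> = (\<Sum>j. ennreal (pmf ?P (Suc j)) * emeasure (chi2_measure (2 * real (Suc j))) B)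
      + ennreal (pmf ?P 0) * emeasure (chi2_measure (2 * real 0)) B"
    by (rule sum_shift)
  also have "ennreal (pmf ?P 0) * emeasure (chi2_measure (2 * real 0)) B = ennreal (exp (- lam / 2)) * emeasure (return borel 0) B"
    using lam by (simp add: chi2_measure_def)
  finally show ?thesis .
qed

lemma chi2_pt:
  assumes [measurable]: "A \<in> sets borel" "B \<in> sets borel" and ab: "\<And>y. y \<noteq> x \<Longrightarrow> (y \<in> A \<longleftrightarrow> y \<in> B)"
  shows "emeasure (chi2_measure (2 * real (Suc j))) A = emeasure (chi2_measure (2 * real (Suc j))) B"
  unfolding chi2_even
proof (subst (1 2) emeasure_density)
  show "(\<integral>\<^sup>+ y. ennreal (erlang_density j (1/2) y) * indicator A y \<partial>lborel)
      = (\<integral>\<^sup>+ y. ennreal (erlang_density j (1/2) y) * indicator B y \<partial>lborel)"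
    using AE_lborel_singleton[of x]
    by (intro nn_integral_cong_AE) (auto elim!: eventually_mono simp: ab split: split_indicator)
qed auto

theorem lemma5p1:
  fixes M :: "'a measure" and U :: "'a \<Rightarrow> real" and lam :: real
  assumes "prob_space M"
    and "U \<in> borel_measurable M"
    and "distr M borel U = ncchi2_measure 4 lam"
    and "lam > 0"
  shows "(\<integral>\<^sup>+\<omega>. ennreal (lam / U \<omega>) \<partial>M) = ennreal (1 - exp (- lam / 2)) \<and>
         (\<forall>x>0.
           (\<integral>\<^sup>+\<omega>. ennreal (lam / U \<omega> * indicator {..<x} (U \<omega>)) \<partial>M)
             = ennreal (ncchi2_cdf 0 lam x - exp (- lam / 2)) \<and>
           (\<integral>\<^sup>+\<omega>. ennreal (lam / U \<omega> * indicator {x..} (U \<omega>)) \<partial>M)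
             = ennreal (1 - ncchi2_cdf 0 lam x))"
proof -
  note I = sumI[OF assms]
  have lam: "lam > 0" by fact
  let ?P = "poisson_pmf (lam/2)"
  define S where "S A = (\<Sum>j. ennreal (pmf ?P (Suc j)) * emeasure (chi2_measure (2 * real (Suc j))) A)" for A
  define N where "N = ncchi2_measure 0 lam"
  have p0: "pmf ?P 0 = exp (- lam / 2)" using lam by simp
  have E: "emeasure N B = S B + ennreal (exp (- lam / 2)) * emeasure (return borel 0) B"
    if "B \<in> sets borel" for B
    unfolding N_def S_def using sumE[OF lam that] .
  have spc: "space (chi2_measure k) = UNIV" for k
    using sets_eq_imp_space_eq[OF sets_chi2[of k]] by simp
  have SU: "S UNIV = (\<Sum>j. ennreal (pmf ?P (Suc j)))"
  proof -
    have "emeasure (chi2_measure (2 * real (Suc j))) UNIV = 1" for j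
      using prob_space.emeasure_space_1[OF prob_chi2, of "Suc j"] spc by metis
    then show ?thesis unfolding S_def by (simp only: mult_1_right)
  qed
  have "1 = (\<integral>\<^sup>+j. 1 \<partial>measure_pmf ?P)" by simp
  also have "\<dots> = (\<Sum>j. ennreal (pmf ?P j))" using pmf_sum[of ?P "\<lambda>_. 1"] by simp
  also have "\<dots> = S UNIV + ennreal (exp (- lam / 2))"
    unfolding SU p0[symmetric] by (rule sum_shift)
  finally have S1: "S UNIV + ennreal (exp (- lam / 2)) = 1" by simp
  have sN: "sets N = sets borel"
    unfolding N_def ncchi2_measure_def by (rule sets_bind) auto
  then have spN: "space N = UNIV" using sets_eq_imp_space_eq[OF sN] by simp
  have "emeasure N UNIV = 1" using E[of UNIV] S1 by simp
  then have PN: "prob_space N" by (intro prob_spaceI) (simp add: spN)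
  have part1: "(\<integral>\<^sup>+\<omega>. ennreal (lam / U \<omega>) \<partial>M) = ennreal (1 - exp (- lam / 2))"
  proof -
    have "(\<integral>\<^sup>+\<omega>. ennreal (lam / U \<omega>) \<partial>M) = S UNIV"
      using I[of UNIV] unfolding S_def by simp
    also have "\<dots> = 1 - ennreal (exp (- lam / 2))"
      using S1 by (metis ennreal_add_diff_cancel_right ennreal_neq_top)
    also have "\<dots> = ennreal (1 - exp (- lam / 2))"
      by (metis ennreal_1 ennreal_minus exp_ge_zero)
    finally show ?thesis .
  qed
  have part2: "(\<integral>\<^sup>+\<omega>. ennreal (lam / U \<omega> * indicator {..<x} (U \<omega>)) \<partial>M)
             = ennreal (ncchi2_cdf 0 lam x - exp (- lam / 2)) \<and>
           (\<integral>\<^sup>+\<omega>. ennreal (lam / U \<omega> * indicator {x..} (U \<omega>)) \<partial>M)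
             = ennreal (1 - ncchi2_cdf 0 lam x)" if x: "x > 0" for x
  proof
    have eq1: "S {..x} = S {..<x}"
      unfolding S_def by (intro suminf_cong arg_cong2[where f="(*)"] refl chi2_pt[where x=x]) auto
    have eq2: "S {x<..} = S {x..}"
      unfolding S_def by (intro suminf_cong arg_cong2[where f="(*)"] refl chi2_pt[where x=x]) auto
    have cdf: "ennreal (ncchi2_cdf 0 lam x) = emeasure N {..x}"
      unfolding ncchi2_cdf_def N_def[symmetric] using finite_measure.emeasure_eq_measure[OF prob_space.finite_measure[OF PN]] by simp
    have Ele: "emeasure N {..x} = S {..<x} + ennreal (exp (- lam / 2))"
      using E[of "{..x}"] x eq1 by simp
    have Egt: "emeasure N {x<..} = S {x..}"
      using E[of "{x<..}"] x eq2 by simp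
    show "(\<integral>\<^sup>+\<omega>. ennreal (lam / U \<omega> * indicator {..<x} (U \<omega>)) \<partial>M)
             = ennreal (ncchi2_cdf 0 lam x - exp (- lam / 2))"
    proof -
      have "ennreal (ncchi2_cdf 0 lam x - exp (- lam / 2)) = ennreal (ncchi2_cdf 0 lam x) - ennreal (exp (- lam / 2))"
        by (simp add: ennreal_minus)
      also have "\<dots> = S {..<x}" unfolding cdf Ele
        by (metis ennreal_add_diff_cancel_right ennreal_neq_top)
      finally show ?thesis using I[of "{..<x}"] unfolding S_def by simp
    qed
    show "(\<integral>\<^sup>+\<omega>. ennreal (lam / U \<omega> * indicator {x..} (U \<omega>)) \<partial>M)
             = ennreal (1 - ncchi2_cdf 0 lam x)"
    proof -
      have "1 - ncchi2_cdf 0 lam x = measure N (space N - {..x})"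
        unfolding ncchi2_cdf_def N_def[symmetric] using prob_space.prob_compl[OF PN, of "{..x}"] sN by simp
      also have "space N - {..x} = {x<..}" using spN by auto
      finally have "ennreal (1 - ncchi2_cdf 0 lam x) = emeasure N {x<..}"
        using finite_measure.emeasure_eq_measure[OF prob_space.finite_measure[OF PN]] by simp
      then show ?thesis using Egt I[of "{x..}"] unfolding S_def by simp
    qed
  qed
  show ?thesis using part1 part2 by blast
qed

end
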